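(* For every non-singular $\rho\in\mathcal{D}$ at which $f$ is differentiable and every $\alpha>0$, $$\langle\nabla f(\rho),\rho(\alpha)-\rho\rangle\le-\frac{D(\rho(\alpha),\rho)}{\alpha}.$$
   Context: $\mathcal{D}=\{\rho\in\mathbb{C}^{d\times d}:\rho\succeq0,\ \operatorname{tr}\rho=1\}$; $f$ is a convex function on $d\times d$ Hermitian matrices; $\langle A,B\rangle=\operatorname{tr}(A^{\mathrm H}B)$ and $\nabla f(\rho)$ is the Hermitian gradient w.r.t. it. $\rho(\alpha):=\exp[\log\rho-\alpha\nabla f(\rho)]/\operatorname{tr}\exp[\log\rho-\alpha\nabla f(\rho)]$. $D(\sigma,\rho)=\operatorname{tr}(\sigma\log\sigma)-\operatorname{tr}(\sigma\log\rho)-\operatorname{tr}(\sigma-\rho)$ (quantum relative entropy, with $0\log0=0$). *)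

theory Defs
  imports "HOL-Analysis.Analysis"
begin

text \<open>Complex d x d matrices are modelled as complex^'n^'n for a finite index type 'n,
  so d = CARD('n) is arbitrary but fixed.\<close>

definition cadj :: "complex^'n^'n \<Rightarrow> complex^'n^'n" where
  "cadj A = (\<chi> i j. cnj (A $ j $ i))"

definition hermitian :: "complex^'n^'n \<Rightarrow> bool" where
  "hermitian A \<longleftrightarrow> cadj A = A"

definition unitary :: "complex^'n^'n \<Rightarrow> bool" where
  "unitary U \<longleftrightarrow> cadj U ** U = mat 1"

definition rdiag :: "real^'n \<Rightarrow> complex^'n^'n" where
  "rdiag v = (\<chi> i j. if i = j then complex_of_real (v $ i) else 0)"

definition herm_fun :: "(real \<Rightarrow> real) \<Rightarrow> complex^'n^'n \<Rightarrow> complex^'n^'n" where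
  "herm_fun g A = (SOME B. \<exists>U lam. unitary U \<and> A = U ** rdiag lam ** cadj U
                       \<and> B = U ** rdiag (\<chi> i. g (lam $ i)) ** cadj U)"

definition mexp :: "complex^'n^'n \<Rightarrow> complex^'n^'n" where
  "mexp A = herm_fun exp A"

definition mlog :: "complex^'n^'n \<Rightarrow> complex^'n^'n" where
  "mlog A = herm_fun ln A"

definition mat_inner :: "complex^'n^'n \<Rightarrow> complex^'n^'n \<Rightarrow> complex" where
  "mat_inner A B = trace (cadj A ** B)"

definition psd :: "complex^'n^'n \<Rightarrow> bool" where
  "psd A \<longleftrightarrow> hermitian A \<and> (\<forall>v. 0 \<le> Re (\<Sum>i\<in>UNIV. cnj (v $ i) * (A *v v) $ i))"

definition density :: "complex^'n^'n \<Rightarrow> bool" where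
  "density \<rho> \<longleftrightarrow> psd \<rho> \<and> trace \<rho> = 1"

definition md_step :: "complex^'n^'n \<Rightarrow> complex^'n^'n \<Rightarrow> real \<Rightarrow> complex^'n^'n" where
  "md_step \<rho> G \<alpha> = (let M = mexp (mlog \<rho> - \<alpha> *\<^sub>R G) in (\<chi> i j. M $ i $ j / trace M))"

text \<open>Quantum relative entropy; tr(sigma log sigma) uses x ln x (which is 0 at 0, i.e. 0 log 0 = 0).
  The quantity is real for Hermitian arguments; we take its real part.\<close>
definition qrel_ent :: "complex^'n^'n \<Rightarrow> complex^'n^'n \<Rightarrow> real" where
  "qrel_ent \<sigma> \<rho> = Re (trace (herm_fun (\<lambda>x. x * ln x) \<sigma>) - trace (\<sigma> ** mlog \<rho>) - trace (\<sigma> - \<rho>))"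

end

theory Submission
  imports Defs
begin


definition cinner :: "complex^'n \<Rightarrow> complex^'n \<Rightarrow> complex" where
  "cinner x y = (\<Sum>i\<in>UNIV. cnj (x$i) * y$i)"

lemma cinner_add_right: "cinner x (y + z) = cinner x y + cinner x z"
  by (simp add: cinner_def distrib_left sum.distrib)
lemma cinner_diff_right: "cinner x (y - z) = cinner x y - cinner x z"
  by (simp add: cinner_def right_diff_distrib sum_subtractf)
lemma cinner_add_left: "cinner (x + y) z = cinner x z + cinner y z"
  by (simp add: cinner_def distrib_right sum.distrib)
lemma cinner_diff_left: "cinner (x - y) z = cinner x z - cinner y z"
  by (simp add: cinner_def left_diff_distrib sum_subtractf)
lemma cinner_scaleR_right: "cinner x (r *\<^sub>R y) = of_real r * cinner x y"
  unfolding cinner_def by (simp add: sum_distrib_left) (simp add: scaleR_conv_of_real algebra_simps)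
lemma cinner_scaleR_left: "cinner (r *\<^sub>R x) y = of_real r * cinner x y"
  unfolding cinner_def by (simp add: sum_distrib_left) (simp add: scaleR_conv_of_real algebra_simps)
lemma cinner_scale_right: "cinner x (c *s y) = c * cinner x y"
  by (simp add: cinner_def sum_distrib_left algebra_simps)
lemma cinner_scale_left: "cinner (c *s x) y = cnj c * cinner x y"
  by (simp add: cinner_def sum_distrib_left algebra_simps)
lemma cinner_zero_right[simp]: "cinner x 0 = 0" by (simp add: cinner_def)
lemma cinner_sum_right: "finite S \<Longrightarrow> cinner x (sum f S) = (\<Sum>v\<in>S. cinner x (f v))"
  by (induct rule: finite_induct) (auto simp: cinner_add_right)
lemma cinner_commute: "cinner y x = cnj (cinner x y)"
  by (simp add: cinner_def mult.commute)
lemma cnj_mult_self: "cnj z * z = of_real ((cmod z)^2)"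
  using complex_norm_square[of z] by (simp add: mult.commute)
lemma cinner_self: "cinner x x = of_real ((norm x)^2)"
proof -
  have "(norm x)^2 = (\<Sum>i\<in>UNIV. (cmod (x$i))^2)"
    by (simp add: norm_vec_def L2_set_def sum_nonneg)
  thus ?thesis by (simp add: cinner_def cnj_mult_self del: of_real_power)
qed

lemma herm_entry: "hermitian A \<Longrightarrow> A$i$j = cnj (A$j$i)"
  unfolding hermitian_def cadj_def by (metis vec_lambda_beta)

lemma cinner_herm: assumes "hermitian A" shows "cinner x (A *v y) = cinner (A *v x) y"
proof -
  have "cinner x (A *v y) = (\<Sum>i\<in>UNIV. \<Sum>j\<in>UNIV. cnj (x$i) * A$i$j * y$j)"
    by (simp add: cinner_def matrix_vector_mult_def sum_distrib_left mult.assoc)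
  also have "\<dots> = (\<Sum>j\<in>UNIV. \<Sum>i\<in>UNIV. cnj (x$i) * A$i$j * y$j)"
    by (rule sum.swap)
  also have "\<dots> = cinner (A *v x) y"
  proof -
    have "cnj ((A *v x)$j) = (\<Sum>i\<in>UNIV. cnj (x$i) * A$i$j)" for j
      by (simp add: matrix_vector_mult_def herm_entry[OF assms, of i j for i] mult.commute)
    hence "cinner (A *v x) y = (\<Sum>j\<in>UNIV. (\<Sum>i\<in>UNIV. cnj (x$i) * A$i$j) * y$j)"
      by (simp add: cinner_def)
    thus ?thesis by (simp add: sum_distrib_right)
  qed
  finally show ?thesis .
qed

lemma cont_cinner: "continuous_on S (\<lambda>x. cinner v x)"
  unfolding cinner_def by (intro continuous_intros)

lemma cont_quad: "continuous_on S (\<lambda>x. Re (cinner x (A *v x)))"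
  unfolding cinner_def matrix_vector_mult_def by (simp, intro continuous_intros)

lemma herm_quad_real: assumes "hermitian A" shows "cinner x (A *v x) = of_real (Re (cinner x (A *v x)))"
proof -
  have e: "cnj (cinner x (A *v x)) = cinner x (A *v x)"
    using cinner_commute[of x "A *v x"] cinner_herm[OF assms, of x x] by simp
  have "Im (cinner x (A *v x)) = 0" using arg_cong[OF e, of Im] by simp
  thus ?thesis by (simp add: complex_eq_iff)
qed

lemma real_contra:
  fixes c d t :: real
  assumes "c > 0" "t = c / (\<bar>d\<bar> + 1)" "2*t*c + t^2 * d \<le> 0"
  shows False
proof -
  have tp: "t > 0" using assms by simp
  have "t * (\<bar>d\<bar> + 1) = c" using assms by simp
  hence "t * \<bar>d\<bar> < c" using tp by (simp add: algebra_simps)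
  hence "t * t * \<bar>d\<bar> < t * c" using tp by (simp add: algebra_simps)
  moreover have "- (t*t*\<bar>d\<bar>) \<le> t^2 * d" by (simp add: power2_eq_square abs_if mult_le_0_iff)
  ultimately have "2*t*c + t^2*d > t*c" by linarith
  moreover have "t * c > 0" using tp assms by simp
  ultimately show False using assms by linarith
qed

lemma mv_scaleR: "(A::complex^'n^'m) *v (c *\<^sub>R x) = c *\<^sub>R (A *v x)"
  by (simp add: vec_eq_iff matrix_vector_mult_def scaleR_sum_right mult_scaleR_right)

lemma Re_ofr: "Re (of_real r * z) = r * Re z" by simp

lemma quad_scaleR: "cinner (r *\<^sub>R z) (A *v (r *\<^sub>R z)) = of_real (r*r) * cinner z (A *v z)"
  by (simp add: mv_scaleR cinner_scaleR_left cinner_scaleR_right)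

lemma spectral_step:
  fixes A :: "complex^'n^'n" and S :: "(complex^'n) set"
  assumes herm: "hermitian A" and fin: "finite S" and card: "card S < CARD('n)"
    and orth: "\<forall>v\<in>S. \<forall>w\<in>S. cinner v w = (if v = w then 1 else 0)"
    and eig: "\<forall>v\<in>S. \<exists>c. A *v v = c *s v"
  shows "\<exists>x. norm x = 1 \<and> (\<forall>v\<in>S. cinner v x = 0) \<and> A *v x = of_real (Re (cinner x (A *v x))) *s x"
proof -
  define T where "T = {x::complex^'n. norm x = 1 \<and> (\<forall>v\<in>S. cinner v x = 0)}"
  have "vec.span S \<noteq> UNIV"
  proof
    assume "vec.span S = UNIV"
    hence "vec.dim (UNIV::(complex^'n) set) \<le> card S" using vec.dim_le_card[of UNIV S] fin by auto
    thus False using card vec_dim_card by (metis not_le)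
  qed
  then obtain x where x: "x \<notin> vec.span S" by auto
  define y where "y = x - (\<Sum>v\<in>S. cinner v x *s v)"
  have "(\<Sum>v\<in>S. cinner v x *s v) \<in> vec.span S"
    by (intro vec.span_sum vec.span_scale vec.span_base)
  hence y0: "y \<noteq> 0" using x unfolding y_def by auto
  have yo: "cinner w y = 0" if w: "w \<in> S" for w
  proof -
    have "(\<Sum>v\<in>S. cinner w (cinner v x *s v)) = (\<Sum>v\<in>S. if v = w then cinner w x else 0)"
      by (rule sum.cong) (use w orth in \<open>auto simp: cinner_scale_right\<close>)
    also have "\<dots> = cinner w x" using w fin by simp
    finally show ?thesis unfolding y_def by (simp add: cinner_diff_right cinner_sum_right[OF fin])
  qed
  have ny: "norm y > 0" using y0 by simp
  have "(1 / norm y) *\<^sub>R y \<in> T"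
    unfolding T_def using ny yo by (simp add: cinner_scaleR_right)
  hence Tne: "T \<noteq> {}" by auto
  have "closed T"
  proof -
    have "T = sphere 0 1 \<inter> (\<Inter>v\<in>S. {x. cinner v x = 0})" unfolding T_def by auto
    moreover have "closed {x. cinner v x = 0}" for v
      by (rule closed_Collect_eq) (auto intro: cont_cinner continuous_intros)
    ultimately show ?thesis by (metis closed_Int closed_sphere closed_INT)
  qed
  moreover have "bounded T" by (rule bounded_subset[OF bounded_cball[of 0 1]]) (auto simp: T_def)
  ultimately have "compact T" by (simp add: compact_eq_bounded_closed)
  then obtain x0 where x0T: "x0 \<in> T" and x0max: "\<forall>z\<in>T. Re (cinner z (A *v z)) \<le> Re (cinner x0 (A *v x0))"
    using continuous_attains_sup[OF _ Tne cont_quad] by blast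
  define lam where "lam = Re (cinner x0 (A *v x0))"
  have x0n: "norm x0 = 1" and x0o: "\<forall>v\<in>S. cinner v x0 = 0" using x0T by (auto simp: T_def)
  have x01: "cinner x0 x0 = 1" using x0n by (simp add: cinner_self)
  have qx0: "cinner x0 (A *v x0) = of_real lam" unfolding lam_def by (rule herm_quad_real[OF herm])
  define u where "u = A *v x0 - of_real lam *s x0"
  have ux0: "cinner x0 u = 0" unfolding u_def by (simp add: cinner_diff_right cinner_scale_right qx0 x01)
  have x0u: "cinner u x0 = 0" using ux0 cinner_commute[of u x0] by simp
  have uS: "cinner v u = 0" if v: "v \<in> S" for v
  proof -
    obtain c where c: "A *v v = c *s v" using eig v by auto
    have "cinner v (A *v x0) = cinner (A *v v) x0" by (rule cinner_herm[OF herm])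
    also have "\<dots> = 0" using c x0o v by (simp add: cinner_scale_left)
    finally show ?thesis unfolding u_def using x0o v by (simp add: cinner_diff_right cinner_scale_right)
  qed
  have "u = 0"
  proof (rule ccontr)
    assume u0: "u \<noteq> 0"
    define c2 where "c2 = (norm u)^2"
    have c2p: "c2 > 0" using u0 by (simp add: c2_def)
    have uu: "cinner u u = of_real c2" by (simp add: c2_def cinner_self)
    define q where "q = Re (cinner u (A *v u))"
    have Ax0: "A *v x0 = u + of_real lam *s x0" by (simp add: u_def)
    have uAx0: "cinner u (A *v x0) = of_real c2" by (simp add: Ax0 cinner_add_right cinner_scale_right uu x0u)
    have x0Au: "cinner x0 (A *v u) = of_real c2"
      using cinner_herm[OF herm, of x0 u] cinner_commute[of "A *v x0" u] uAx0 by simp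
    define t where "t = c2 / (\<bar>q - lam * c2\<bar> + 1)"
    define z where "z = x0 + t *\<^sub>R u"
    have zz: "cinner z z = of_real (1 + t*t*c2)"
      by (simp add: z_def cinner_add_left cinner_add_right cinner_scaleR_left cinner_scaleR_right x01 ux0 x0u uu)
    hence "complex_of_real ((norm z)^2) = complex_of_real (1 + t*t*c2)" by (simp only: cinner_self)
    hence nz2: "(norm z)^2 = 1 + t*t*c2" using of_real_eq_iff by blast
    have "0 < 1 + t*t*c2" using c2p by (simp add: add_pos_nonneg mult_nonneg_nonneg)
    hence "norm z \<noteq> 0" using nz2 by auto
    hence nzp: "norm z > 0" by simp
    have zS: "cinner v z = 0" if "v \<in> S" for v
      using that x0o uS by (simp add: z_def cinner_add_right cinner_scaleR_right)
    have "norm ((1 / norm z) *\<^sub>R z) = 1" using nzp by simp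
    hence zT: "(1 / norm z) *\<^sub>R z \<in> T"
      unfolding T_def using zS by (simp add: cinner_scaleR_right)
    have Az: "A *v z = A *v x0 + t *\<^sub>R (A *v u)" by (simp add: z_def matrix_vector_right_distrib mv_scaleR)
    have "cinner z (A *v z) = cinner x0 (A *v x0) + of_real t * cinner x0 (A *v u)
       + of_real t * cinner u (A *v x0) + of_real t * (of_real t * cinner u (A *v u))"
      unfolding Az by (simp add: z_def cinner_add_left cinner_add_right cinner_scaleR_left cinner_scaleR_right algebra_simps)
    hence Qz: "Re (cinner z (A *v z)) = lam + 2*t*c2 + t*t*q"
      by (simp add: qx0 uAx0 x0Au q_def)
    have "Re (cinner ((1 / norm z) *\<^sub>R z) (A *v ((1 / norm z) *\<^sub>R z))) \<le> lam"
      using x0max zT unfolding lam_def by blast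
    moreover have "Re (cinner ((1 / norm z) *\<^sub>R z) (A *v ((1 / norm z) *\<^sub>R z)))
        = Re (cinner z (A *v z)) / (1 + t*t*c2)"
      unfolding quad_scaleR Re_ofr nz2[symmetric] by (simp add: power2_eq_square)
    ultimately have "Re (cinner z (A *v z)) / (1 + t*t*c2) \<le> lam" by simp
    hence "Re (cinner z (A *v z)) \<le> lam * (1 + t*t*c2)" using \<open>0 < 1 + t*t*c2\<close>
      by (simp add: divide_le_eq)
    hence "lam + 2*t*c2 + t*t*q \<le> lam * (1 + t*t*c2)" using Qz by simp
    hence "2*t*c2 + t^2 * (q - lam*c2) \<le> 0" by (simp add: algebra_simps power2_eq_square)
    thus False using real_contra[OF c2p t_def] by blast
  qed
  hence "A *v x0 = of_real lam *s x0" unfolding u_def by simp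
  thus ?thesis using x0n x0o unfolding lam_def by blast
qed




lemma mult_if0r: "x * (if P then a else 0) = (if P then x * a else (0::'a::mult_zero))" by simp
lemma mult_if0l: "(if P then a else 0) * x = (if P then a * x else (0::'a::mult_zero))" by simp

lemma spectral_sets:
  fixes A :: "complex^'n^'n"
  assumes herm: "hermitian A"
  shows "k \<le> CARD('n) \<Longrightarrow> \<exists>S. finite S \<and> card S = k \<and> (\<forall>v\<in>S. \<forall>w\<in>S. cinner v w = (if v = w then 1 else 0)) \<and> (\<forall>v\<in>S. \<exists>c. A *v v = c *s v)"
proof (induction k)
  case 0 show ?case by (intro exI[of _ "{}"]) auto
next
  case (Suc k)
  then obtain S where S: "finite S" "card S = k" "\<forall>v\<in>S. \<forall>w\<in>S. cinner v w = (if v = w then 1 else 0)"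
    "\<forall>v\<in>S. \<exists>c. A *v v = c *s v" by auto
  have "card S < CARD('n)" using Suc.prems S(2) by simp
  from spectral_step[OF herm S(1) this S(3) S(4)] obtain x where x: "norm x = 1" "\<forall>v\<in>S. cinner v x = 0"
    "A *v x = of_real (Re (cinner x (A *v x))) *s x" by blast
  have x1: "cinner x x = 1" using x(1) by (simp add: cinner_self)
  have xS: "x \<notin> S" using x(2) x1 by auto
  have xv: "cinner x v = 0" if "v \<in> S" for v using x(2) that cinner_commute[of x v] by simp
  show ?case
  proof (intro exI[of _ "insert x S"] conjI)
    show "finite (insert x S)" using S(1) by simp
    show "card (insert x S) = Suc k" using S(1,2) xS by simp
    show "\<forall>v\<in>insert x S. \<forall>w\<in>insert x S. cinner v w = (if v = w then 1 else 0)"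
      using S(3) x(2) xv x1 xS by auto
    show "\<forall>v\<in>insert x S. \<exists>c. A *v v = c *s v" using S(4) x(3) by blast
  qed
qed

lemma unitary_right: "unitary U \<Longrightarrow> U ** cadj U = mat 1"
  unfolding unitary_def using matrix_left_right_inverse by blast

lemma spectral:
  fixes A :: "complex^'n^'n"
  assumes herm: "hermitian A"
  shows "\<exists>U lam. unitary U \<and> A = U ** rdiag lam ** cadj U"
proof -
  obtain S where S: "finite S" "card S = CARD('n)" "\<forall>v\<in>S. \<forall>w\<in>S. cinner v w = (if v = w then 1 else 0)"
    "\<forall>v\<in>S. \<exists>c. A *v v = c *s v" using spectral_sets[OF herm, of "CARD('n)"] by auto
  obtain f where f: "bij_betw f (UNIV::'n set) S"
    using finite_same_card_bij[of "UNIV::'n set" S] S(1,2) by auto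
  have fS: "f j \<in> S" for j using f bij_betwE by blast
  have finj: "f i = f j \<Longrightarrow> i = j" for i j using f by (auto simp: bij_betw_def inj_on_def)
  define U where "U = (\<chi> i j. f j $ i)"
  define lam where "lam = (\<chi> j. Re (cinner (f j) (A *v f j)))"
  have eigj: "A *v f j = of_real (lam$j) *s f j" for j
  proof -
    obtain c where c: "A *v f j = c *s f j" using S(4) fS by blast
    have "cinner (f j) (A *v f j) = c" using S(3) fS by (simp add: c cinner_scale_right)
    moreover have "cinner (f j) (A *v f j) = of_real (lam $ j)"
      unfolding lam_def using herm_quad_real[OF herm] by simp
    ultimately show ?thesis using c by simp
  qed
  have Uent: "(cadj U ** U) $ i $ j = cinner (f i) (f j)" for i j
    by (simp add: matrix_matrix_mult_def cadj_def U_def cinner_def)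
  have UU: "cadj U ** U = mat 1"
    unfolding vec_eq_iff using S(3) fS finj by (auto simp: Uent mat_def)
  hence un: "unitary U" by (simp add: unitary_def)
  have AU: "A ** U = U ** rdiag lam"
  proof -
    have "(A ** U) $ i $ j = (A *v f j) $ i" for i j
      by (simp add: matrix_matrix_mult_def matrix_vector_mult_def U_def)
    moreover have "(U ** rdiag lam) $ i $ j = (of_real (lam$j) *s f j) $ i" for i j
      by (simp add: matrix_matrix_mult_def rdiag_def U_def mult.commute mult_if0r)
    ultimately show ?thesis using eigj by (simp add: vec_eq_iff)
  qed
  have "A = A ** (U ** cadj U)" using unitary_right[OF un] by simp
  also have "\<dots> = U ** rdiag lam ** cadj U" by (simp add: matrix_mul_assoc AU)
  finally show ?thesis using un by blast
qed

lemma mul_rdiag_right: "(X ** rdiag a)$i$j = X$i$j * of_real (a$j)"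
  by (simp add: matrix_matrix_mult_def rdiag_def mult_if0r)

lemma mul_rdiag_left: "(rdiag a ** X)$i$j = of_real (a$i) * X$i$j"
  by (simp add: matrix_matrix_mult_def rdiag_def mult_if0l)

lemma fc_unique:
  fixes U V :: "complex^'n^'n"
  assumes U: "unitary U" and V: "unitary V" and eq: "U ** rdiag a ** cadj U = V ** rdiag b ** cadj V"
  shows "U ** rdiag (\<chi> i. g (a$i)) ** cadj U = V ** rdiag (\<chi> i. g (b$i)) ** cadj V"
proof -
  have UU: "cadj U ** U = mat 1" and VV: "cadj V ** V = mat 1" using U V by (auto simp: unitary_def)
  have UU': "U ** cadj U = mat 1" and VV': "V ** cadj V = mat 1" using U V by (auto simp: unitary_right)
  define W where "W = cadj V ** U"
  have "W ** rdiag a = cadj V ** (U ** rdiag a ** cadj U) ** U"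
    by (simp add: W_def matrix_mul_assoc[symmetric] UU)
  also have "\<dots> = cadj V ** (V ** rdiag b ** cadj V) ** U" by (simp add: eq)
  also have "\<dots> = rdiag b ** W"
    by (simp add: W_def matrix_mul_assoc[symmetric]) (simp add: matrix_mul_assoc VV)
  finally have WD: "W ** rdiag a = rdiag b ** W" .
  have ent: "W$i$j * of_real (g (a$j)) = of_real (g (b$i)) * W$i$j" for i j
  proof -
    have "W$i$j * of_real (a$j) = of_real (b$i) * W$i$j"
      using arg_cong[OF WD, of "\<lambda>M. M$i$j"] by (simp add: mul_rdiag_right mul_rdiag_left)
    hence "W$i$j = 0 \<or> a$j = b$i" by (auto simp: mult.commute)
    thus ?thesis by auto
  qed
  have WgD: "W ** rdiag (\<chi> i. g (a$i)) = rdiag (\<chi> i. g (b$i)) ** W"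
    by (simp add: vec_eq_iff mul_rdiag_right mul_rdiag_left ent)
  have VW: "V ** W = U" by (simp add: W_def matrix_mul_assoc VV')
  have WU: "W ** cadj U = cadj V" by (simp add: W_def matrix_mul_assoc[symmetric] UU')
  have "U ** rdiag (\<chi> i. g (a$i)) ** cadj U = V ** (W ** rdiag (\<chi> i. g (a$i))) ** cadj U"
    by (simp add: VW matrix_mul_assoc)
  also have "\<dots> = V ** rdiag (\<chi> i. g (b$i)) ** (W ** cadj U)"
    by (simp add: WgD matrix_mul_assoc)
  also have "\<dots> = V ** rdiag (\<chi> i. g (b$i)) ** cadj V" by (simp add: WU)
  finally show ?thesis .
qed

lemma herm_fun_eq:
  assumes U: "unitary U"
  shows "herm_fun g (U ** rdiag a ** cadj U) = U ** rdiag (\<chi> i. g (a$i)) ** cadj U"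
proof -
  let ?P = "\<lambda>B. \<exists>V b. unitary V \<and> U ** rdiag a ** cadj U = V ** rdiag b ** cadj V
              \<and> B = V ** rdiag (\<chi> i. g (b$i)) ** cadj V"
  have "?P (U ** rdiag (\<chi> i. g (a$i)) ** cadj U)" using U by blast
  hence "?P (herm_fun g (U ** rdiag a ** cadj U))" unfolding herm_fun_def by (rule someI)
  then obtain V b where V: "unitary V" "U ** rdiag a ** cadj U = V ** rdiag b ** cadj V"
    "herm_fun g (U ** rdiag a ** cadj U) = V ** rdiag (\<chi> i. g (b$i)) ** cadj V" by blast
  thus ?thesis using fc_unique[OF U V(1) V(2), of g] by simp
qed




lemma mm_entry: "(X ** Y)$i$j = (\<Sum>k\<in>UNIV. X$i$k * Y$k$j)"
  by (simp add: matrix_matrix_mult_def)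

lemma cadj_mult: "cadj (X ** Y) = cadj Y ** cadj (X::complex^'n^'n)"
  by (simp add: vec_eq_iff cadj_def matrix_matrix_mult_def mult.commute)

lemma cadj_cadj[simp]: "cadj (cadj X) = X" by (simp add: vec_eq_iff cadj_def)
lemma cadj_rdiag[simp]: "cadj (rdiag a) = rdiag a" by (simp add: vec_eq_iff cadj_def rdiag_def)

lemma herm_UDU: "hermitian (U ** rdiag a ** cadj U)"
  unfolding hermitian_def by (simp add: cadj_mult matrix_mul_assoc)

lemma herm_diff_scale: "hermitian X \<Longrightarrow> hermitian Y \<Longrightarrow> hermitian (X - c *\<^sub>R Y)"
  unfolding hermitian_def by (simp add: vec_eq_iff cadj_def)

lemma rdiag_mult: "rdiag a ** rdiag b = rdiag (\<chi> i. a$i * b$i)"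
  by (simp add: vec_eq_iff mul_rdiag_right) (simp add: rdiag_def)

lemma UDU_mult: assumes "unitary U"
  shows "(U ** rdiag a ** cadj U) ** (U ** rdiag b ** cadj U) = U ** rdiag (\<chi> i. a$i * b$i) ** cadj U"
proof -
  have "(U ** rdiag a ** cadj U) ** (U ** rdiag b ** cadj U) = U ** rdiag a ** (cadj U ** U) ** rdiag b ** cadj U"
    by (simp add: matrix_mul_assoc)
  also have "\<dots> = U ** (rdiag a ** rdiag b) ** cadj U"
    using assms by (simp add: unitary_def matrix_mul_assoc)
  finally show ?thesis by (simp add: rdiag_mult)
qed

lemma trace_rdiag: "trace (rdiag a) = (\<Sum>i\<in>UNIV. complex_of_real (a$i))"
  by (simp add: trace_def rdiag_def)

lemma trace_UDU: assumes "unitary U" shows "trace (U ** rdiag a ** cadj U) = (\<Sum>i\<in>UNIV. complex_of_real (a$i))"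
proof -
  have "trace ((U ** rdiag a) ** cadj U) = trace (cadj U ** (U ** rdiag a))" by (rule trace_mul_sym)
  also have "\<dots> = trace (rdiag a)" using assms by (simp add: matrix_mul_assoc unitary_def)
  finally show ?thesis by (simp add: trace_rdiag)
qed

lemma UDU_entry: "(U ** rdiag a ** cadj U)$i$j = (\<Sum>k\<in>UNIV. U$i$k * of_real (a$k) * cnj (U$j$k))"
  by (simp add: mm_entry[of "U ** rdiag a"] mul_rdiag_right cadj_def)

lemma trace_scaleR: "trace (c *\<^sub>R (X::complex^'n^'n)) = of_real c * trace X"
proof -
  have "trace (c *\<^sub>R X) = c *\<^sub>R trace X" unfolding trace_def by (simp add: scaleR_sum_right)
  thus ?thesis by (simp add: scaleR_conv_of_real)
qed

lemma mm_scaleR: "(X::complex^'n^'n) ** (c *\<^sub>R Y) = c *\<^sub>R (X ** Y)"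
  by (simp add: vec_eq_iff matrix_matrix_mult_def scaleR_sum_right mult_scaleR_right)

lemma mm_diff: "(X::complex^'n^'n) ** (Y - Z) = X ** Y - X ** Z"
  by (simp add: vec_eq_iff matrix_matrix_mult_def right_diff_distrib sum_subtractf)

lemma mm_add: "(X::complex^'n^'n) ** (Y + Z) = X ** Y + X ** Z"
  by (simp add: vec_eq_iff matrix_matrix_mult_def distrib_left sum.distrib)

lemma gibbs:
  fixes p m :: "'n::finite \<Rightarrow> real" and P :: "'n \<Rightarrow> 'n \<Rightarrow> real"
  assumes pp: "\<And>l. p l > 0" and ps: "(\<Sum>l\<in>UNIV. p l) = 1" and Pp: "\<And>j l. P j l \<ge> 0"
    and Pc: "\<And>l. (\<Sum>j\<in>UNIV. P j l) = 1" and Pr: "\<And>j. (\<Sum>l\<in>UNIV. P j l) = 1"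
  shows "(\<Sum>l\<in>UNIV. p l * (\<Sum>j\<in>UNIV. P j l * m j)) - (\<Sum>l\<in>UNIV. p l * ln (p l)) \<le> ln (\<Sum>j\<in>UNIV. exp (m j))"
proof -
  define Z where "Z = (\<Sum>j\<in>UNIV. exp (m j))"
  have Zp: "Z > 0" unfolding Z_def by (intro sum_pos) auto
  define c where "c l = (\<Sum>j\<in>UNIV. P j l * m j)" for l
  define r where "r l = (\<Sum>j\<in>UNIV. P j l * exp (m j))" for l
  have er: "exp (c l) \<le> r l" for l
  proof -
    have "P j l * (exp (c l) * (1 + (m j - c l))) \<le> P j l * exp (m j)" for j
    proof -
      have "exp (c l) * (1 + (m j - c l)) \<le> exp (c l) * exp (m j - c l)"
        by (rule mult_left_mono) (auto simp: exp_ge_add_one_self)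
      also have "\<dots> = exp (m j)" by (simp add: exp_diff)
      finally show ?thesis using Pp by (simp add: mult_left_mono)
    qed
    hence "(\<Sum>j\<in>UNIV. P j l * (exp (c l) * (1 + (m j - c l)))) \<le> r l"
      unfolding r_def by (intro sum_mono) auto
    moreover have "(\<Sum>j\<in>UNIV. P j l * (exp (c l) * (1 + (m j - c l))))
        = exp (c l) * ((\<Sum>j\<in>UNIV. P j l) + (\<Sum>j\<in>UNIV. P j l * m j) - c l * (\<Sum>j\<in>UNIV. P j l))"
      by (simp add: algebra_simps sum.distrib sum_subtractf sum_distrib_left sum_distrib_right)
    ultimately show ?thesis by (simp add: Pc c_def)
  qed
  have step: "p l * c l - p l * ln (p l) - p l * ln Z \<le> r l / Z - p l" for l
  proof -
    have y: "exp (c l) / (p l * Z) > 0" using pp[of l] Zp by simp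
    have "ln (exp (c l) / (p l * Z)) \<le> exp (c l) / (p l * Z) - 1" by (rule ln_le_minus_one[OF y])
    moreover have "ln (exp (c l) / (p l * Z)) = c l - ln (p l) - ln Z"
      using pp[of l] Zp by (simp add: ln_div ln_mult)
    ultimately have "c l - ln (p l) - ln Z \<le> exp (c l) / (p l * Z) - 1" by simp
    hence "p l * (c l - ln (p l) - ln Z) \<le> p l * (exp (c l) / (p l * Z) - 1)"
      using pp[of l] by (simp add: mult_left_mono)
    also have "\<dots> = exp (c l) / Z - p l" using pp[of l] by (simp add: field_simps)
    also have "\<dots> \<le> r l / Z - p l" using er[of l] Zp by (simp add: divide_right_mono)
    finally show ?thesis by (simp add: algebra_simps)
  qed
  have "(\<Sum>l\<in>UNIV. p l * c l - p l * ln (p l) - p l * ln Z) \<le> (\<Sum>l\<in>UNIV. r l / Z - p l)"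
    by (rule sum_mono) (rule step)
  moreover have "(\<Sum>l\<in>UNIV. r l) = Z"
  proof -
    have "(\<Sum>l\<in>UNIV. r l) = (\<Sum>j\<in>UNIV. exp (m j) * (\<Sum>l\<in>UNIV. P j l))"
      unfolding r_def by (subst sum.swap) (simp add: sum_distrib_left mult.commute)
    thus ?thesis by (simp add: Pr Z_def)
  qed
  ultimately have "(\<Sum>l\<in>UNIV. p l * c l) - (\<Sum>l\<in>UNIV. p l * ln (p l)) - ln Z \<le> 0"
    using Zp ps by (simp add: sum_subtractf sum_divide_distrib[symmetric] sum_distrib_right[symmetric])
  thus ?thesis unfolding c_def Z_def by simp
qed




lemma mult_cnj_self: "z * cnj z = of_real ((cmod z)^2)"
  using complex_norm_square[of z] by simp

lemma unitary_cols: assumes "unitary W" shows "(\<Sum>j\<in>UNIV. (cmod (W$j$l))^2) = 1"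
proof -
  have "(cadj W ** W)$l$l = 1" using assms by (simp add: unitary_def mat_def)
  moreover have "(cadj W ** W)$l$l = of_real (\<Sum>j\<in>UNIV. (cmod (W$j$l))^2)"
    unfolding mm_entry cadj_def of_real_sum by (simp add: cnj_mult_self del: of_real_power)
  ultimately show ?thesis using of_real_eq_1_iff by metis
qed

lemma unitary_rows: assumes "unitary W" shows "(\<Sum>l\<in>UNIV. (cmod (W$j$l))^2) = 1"
proof -
  have "(W ** cadj W)$j$j = 1" using unitary_right[OF assms] by (simp add: mat_def)
  moreover have "(W ** cadj W)$j$j = of_real (\<Sum>l\<in>UNIV. (cmod (W$j$l))^2)"
    unfolding mm_entry cadj_def of_real_sum by (simp add: mult_cnj_self del: of_real_power)
  ultimately show ?thesis using of_real_eq_1_iff by metis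
qed

lemma unitary_prod: assumes "unitary U" "unitary V" shows "unitary (cadj V ** U)"
proof -
  have "cadj (cadj V ** U) ** (cadj V ** U) = cadj U ** (V ** cadj V) ** U"
    by (simp add: cadj_mult matrix_mul_assoc)
  also have "\<dots> = mat 1" using assms unitary_right[OF assms(2)] by (simp add: unitary_def)
  finally show ?thesis by (simp add: unitary_def)
qed

lemma trace_cross:
  assumes U: "unitary U" and V: "unitary V"
  shows "trace ((U ** rdiag a ** cadj U) ** (V ** rdiag b ** cadj V))
     = of_real (\<Sum>l\<in>UNIV. a$l * (\<Sum>j\<in>UNIV. (cmod ((cadj V ** U)$j$l))^2 * b$j))"
proof -
  define W where "W = cadj V ** U"
  have "trace ((U ** rdiag a ** cadj U) ** (V ** rdiag b ** cadj V))
      = trace (U ** (rdiag a ** cadj U ** V ** rdiag b ** cadj V))" by (simp add: matrix_mul_assoc)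
  also have "\<dots> = trace ((rdiag a ** cadj U ** V ** rdiag b ** cadj V) ** U)" by (rule trace_mul_sym)
  also have "\<dots> = trace (rdiag a ** (cadj W ** (rdiag b ** W)))"
    by (simp add: W_def cadj_mult matrix_mul_assoc)
  also have "\<dots> = (\<Sum>l\<in>UNIV. of_real (a$l) * (cadj W ** (rdiag b ** W))$l$l)"
    by (simp add: trace_def mul_rdiag_left)
  also have "\<dots> = (\<Sum>l\<in>UNIV. of_real (a$l) * (\<Sum>j\<in>UNIV. of_real ((cmod (W$j$l))^2 * b$j)))"
  proof (rule sum.cong[OF refl])
    fix l
    have "(cadj W ** (rdiag b ** W))$l$l = (\<Sum>j\<in>UNIV. cnj (W$j$l) * (of_real (b$j) * W$j$l))"
      unfolding mm_entry[of "cadj W"] mul_rdiag_left by (simp add: cadj_def)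
    also have "\<dots> = (\<Sum>j\<in>UNIV. of_real ((cmod (W$j$l))^2 * b$j))"
    proof (rule sum.cong[OF refl])
      fix j
      have "cnj (W$j$l) * (of_real (b$j) * W$j$l) = (cnj (W$j$l) * W$j$l) * of_real (b$j)"
        by (simp add: algebra_simps)
      also have "\<dots> = of_real ((cmod (W$j$l))^2) * of_real (b$j)" by (simp only: cnj_mult_self)
      finally show "cnj (W$j$l) * (of_real (b$j) * W$j$l) = of_real ((cmod (W$j$l))^2 * b$j)"
        by (simp only: of_real_mult)
    qed
    finally show "of_real (a$l) * (cadj W ** (rdiag b ** W))$l$l = of_real (a$l) * (\<Sum>j\<in>UNIV. of_real ((cmod (W$j$l))^2 * b$j))"
      by simp
  qed
  also have "\<dots> = of_real (\<Sum>l\<in>UNIV. a$l * (\<Sum>j\<in>UNIV. (cmod (W$j$l))^2 * b$j))"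
    by (simp only: of_real_sum of_real_mult)
  finally show ?thesis unfolding W_def .
qed




theorem lemma5:
  fixes f :: "complex^'n^'n \<Rightarrow> real" and \<rho> G :: "complex^'n^'n" and \<alpha> :: real
  assumes "convex_on {A. hermitian A} f"
    and "density \<rho>" and "invertible \<rho>"
    and "hermitian G"
    and "(f has_derivative (\<lambda>H. Re (mat_inner G H))) (at \<rho> within {A. hermitian A})"
    and "\<alpha> > 0"
  shows "Re (mat_inner G (md_step \<rho> G \<alpha> - \<rho>)) \<le> - qrel_ent (md_step \<rho> G \<alpha>) \<rho> / \<alpha>"
proof -
  have rh: "hermitian \<rho>" and rpsd: "\<And>v. 0 \<le> Re (\<Sum>i\<in>UNIV. cnj (v$i) * (\<rho> *v v)$i)"
    and tr1: "trace \<rho> = 1"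
    using assms(2) by (auto simp: density_def psd_def)
  obtain U p where U: "unitary U" and rho: "\<rho> = U ** rdiag p ** cadj U" using spectral[OF rh] by blast
  have UU: "cadj U ** U = mat 1" using U unitary_def by auto
  have pnn: "p$j \<ge> 0" and pnz: "p$j \<noteq> 0" for j
  proof -
    define v where "v = (\<chi> i. U$i$j)"
    have rU: "\<rho> ** U = U ** rdiag p" unfolding rho by (simp add: matrix_mul_assoc[symmetric] UU)
    have "(\<rho> *v v)$i = (\<rho> ** U)$i$j" for i by (simp add: matrix_vector_mult_def matrix_matrix_mult_def v_def)
    hence rv: "\<rho> *v v = of_real (p$j) *s v" by (simp add: vec_eq_iff rU mul_rdiag_right v_def mult.commute)
    have "cinner v v = (cadj U ** U)$j$j" by (simp add: cinner_def v_def matrix_matrix_mult_def cadj_def)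
    hence vv: "cinner v v = 1" by (simp add: UU mat_def)
    have "(\<Sum>i\<in>UNIV. cnj (v$i) * (\<rho> *v v)$i) = cinner v (\<rho> *v v)" by (simp add: cinner_def)
    also have "\<dots> = of_real (p$j)" by (simp add: rv cinner_scale_right vv)
    finally have q: "Re (\<Sum>i\<in>UNIV. cnj (v$i) * (\<rho> *v v)$i) = p$j" by simp
    show "p$j \<ge> 0" using rpsd[of v] q by simp
    show "p$j \<noteq> 0"
    proof
      assume p0: "p$j = 0"
      obtain B where B: "B ** \<rho> = mat 1" using assms(3) invertible_left_inverse by blast
      have "v = B *v (\<rho> *v v)" by (simp add: matrix_vector_mul_assoc B)
      hence "v = 0" using p0 rv by simp
      thus False using vv by simp
    qed
  qed
  have pp: "p$j > 0" for j using pnn[of j] pnz[of j] by simp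
  have "trace \<rho> = of_real (\<Sum>i\<in>UNIV. p$i)" unfolding rho trace_UDU[OF U] by simp
  hence psum: "(\<Sum>i\<in>UNIV. p$i) = 1" using tr1 of_real_eq_1_iff by metis
  define lp where "lp = (\<chi> i. ln (p$i))"
  have Ld: "mlog \<rho> = U ** rdiag lp ** cadj U" unfolding mlog_def rho lp_def by (rule herm_fun_eq[OF U])
  have hL: "hermitian (mlog \<rho>)" unfolding Ld by (rule herm_UDU)
  define H where "H = mlog \<rho> - \<alpha> *\<^sub>R G"
  have hH: "hermitian H" unfolding H_def by (rule herm_diff_scale[OF hL assms(4)])
  obtain V mu where V: "unitary V" and Hd: "H = V ** rdiag mu ** cadj V" using spectral[OF hH] by blast
  define e where "e = (\<chi> i. exp (mu$i))"
  have Md: "mexp H = V ** rdiag e ** cadj V" unfolding mexp_def Hd e_def by (rule herm_fun_eq[OF V])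
  define Z where "Z = (\<Sum>i\<in>UNIV. exp (mu$i))"
  have Zp: "Z > 0" unfolding Z_def by (intro sum_pos) auto
  have trM: "trace (mexp H) = of_real Z" unfolding Md trace_UDU[OF V] by (simp add: e_def Z_def)
  define q where "q = (\<chi> i. exp (mu$i) / Z)"
  define \<sigma> where "\<sigma> = md_step \<rho> G \<alpha>"
  have sig: "\<sigma> = V ** rdiag q ** cadj V"
  proof -
    have "\<sigma> = (\<chi> i j. mexp H $ i $ j / trace (mexp H))" unfolding \<sigma>_def md_step_def H_def Let_def ..
    also have "\<dots> = V ** rdiag q ** cadj V"
      unfolding trM unfolding Md by (simp add: vec_eq_iff UDU_entry e_def q_def sum_divide_distrib)
    finally show ?thesis .
  qed
  have qsum: "(\<Sum>i\<in>UNIV. q$i) = 1" using Zp by (simp add: q_def Z_def sum_divide_distrib[symmetric])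
  have lnq: "ln (q$i) = mu$i - ln Z" for i using Zp by (simp add: q_def ln_div)
  define S1 where "S1 = (\<Sum>i\<in>UNIV. q$i * mu$i)"
  define tG where "tG = trace (\<sigma> ** G)"
  have trh: "trace (herm_fun (\<lambda>x. x * ln x) \<sigma>) = of_real (S1 - ln Z)"
  proof -
    have "trace (herm_fun (\<lambda>x. x * ln x) \<sigma>) = of_real (\<Sum>i\<in>UNIV. q$i * ln (q$i))"
      unfolding sig herm_fun_eq[OF V] trace_UDU[OF V] by simp
    also have "(\<Sum>i\<in>UNIV. q$i * ln (q$i)) = S1 - ln Z * (\<Sum>i\<in>UNIV. q$i)"
      by (simp add: lnq S1_def right_diff_distrib sum_subtractf sum_distrib_left mult.commute)
    finally show ?thesis using qsum by simp
  qed
  have Lsplit: "mlog \<rho> = H + \<alpha> *\<^sub>R G" by (simp add: H_def)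
  have trsH: "trace (\<sigma> ** H) = of_real S1"
    unfolding sig Hd UDU_mult[OF V] trace_UDU[OF V] S1_def by simp
  have trsL: "trace (\<sigma> ** mlog \<rho>) = of_real S1 + of_real \<alpha> * tG"
    unfolding Lsplit mm_add trace_add trsH mm_scaleR trace_scaleR tG_def ..
  have trs: "trace \<sigma> = 1" unfolding sig trace_UDU[OF V]
    using qsum of_real_sum[of "\<lambda>i. q$i" UNIV, where 'a=complex] by (metis of_real_1)
  have trdiff: "trace (\<sigma> - \<rho>) = 0" using trs tr1 by (simp add: trace_sub)
  have qrel: "qrel_ent \<sigma> \<rho> = - ln Z - \<alpha> * Re tG"
    unfolding qrel_ent_def trh trsL trdiff by (simp add: Re_ofr)
  have lhs: "Re (mat_inner G (\<sigma> - \<rho>)) = Re tG - Re (trace (\<rho> ** G))"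
  proof -
    have "cadj G = G" using assms(4) by (simp add: hermitian_def)
    hence "mat_inner G (\<sigma> - \<rho>) = trace (G ** \<sigma>) - trace (G ** \<rho>)"
      by (simp add: mat_inner_def mm_diff trace_sub)
    thus ?thesis by (simp add: tG_def trace_mul_sym[of G])
  qed
  define W where "W = cadj V ** U"
  have Wu: "unitary W" unfolding W_def by (rule unitary_prod[OF U V])
  have key: "- \<alpha> * Re (trace (\<rho> ** G)) \<le> ln Z"
  proof -
    have aG: "\<alpha> *\<^sub>R G = mlog \<rho> - H" by (simp add: H_def)
    have "of_real \<alpha> * trace (\<rho> ** G) = trace (\<rho> ** (\<alpha> *\<^sub>R G))" by (simp add: mm_scaleR trace_scaleR)
    also have "\<dots> = trace (\<rho> ** mlog \<rho>) - trace (\<rho> ** H)" by (simp add: aG mm_diff trace_sub)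
    also have "trace (\<rho> ** mlog \<rho>) = of_real (\<Sum>i\<in>UNIV. p$i * ln (p$i))"
      unfolding Ld unfolding rho UDU_mult[OF U] trace_UDU[OF U] lp_def by simp
    also have "trace (\<rho> ** H) = of_real (\<Sum>l\<in>UNIV. p$l * (\<Sum>j\<in>UNIV. (cmod (W$j$l))^2 * mu$j))"
      unfolding rho Hd trace_cross[OF U V] W_def ..
    finally have "\<alpha> * Re (trace (\<rho> ** G)) = (\<Sum>i\<in>UNIV. p$i * ln (p$i)) - (\<Sum>l\<in>UNIV. p$l * (\<Sum>j\<in>UNIV. (cmod (W$j$l))^2 * mu$j))"
      using Re_ofr[of \<alpha> "trace (\<rho> ** G)"] by simp
    moreover have "(\<Sum>l\<in>UNIV. p$l * (\<Sum>j\<in>UNIV. (cmod (W$j$l))^2 * mu$j)) - (\<Sum>l\<in>UNIV. p$l * ln (p$l)) \<le> ln Z"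
      unfolding Z_def
      by (rule gibbs[where p="\<lambda>l. p$l" and P="\<lambda>j l. (cmod (W$j$l))^2" and m="\<lambda>j. mu$j"])
         (auto simp: pp psum unitary_cols[OF Wu] unitary_rows[OF Wu])
    ultimately show ?thesis by linarith
  qed
  have "- Re (trace (\<rho> ** G)) \<le> ln Z / \<alpha>" using key assms(6) by (simp add: le_divide_eq mult.commute)
  moreover have "- qrel_ent \<sigma> \<rho> / \<alpha> = ln Z / \<alpha> + Re tG" using assms(6) unfolding qrel by (simp add: field_simps)
  ultimately have "Re (mat_inner G (\<sigma> - \<rho>)) \<le> - qrel_ent \<sigma> \<rho> / \<alpha>" using lhs by linarith
  thus ?thesis unfolding \<sigma>_def .
qed


end
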